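(* Let $A,B$ be two sets of size $r$, and let $\sigma:A\to B$ be a uniformly random bijection. Let $A_1,\dots,A_k\subseteq A'\subseteq A$ and $B_1,\dots,B_k\subseteq B'\subseteq B$. Then the function $$t\mapsto P\left[\bigwedge_{i=1}^k\left[\sigma(A_i)\neq B_i\right]\ \Bigm|\ |\sigma(A')\setminus B'|=t\right]$$ is nondecreasing in $t$ (over those $t$ for which the conditioning event has nonzero probability).
   Context: $\sigma(A_i)$ denotes the image set $\{\sigma(a):a\in A_i\}$. *)

theory Defs
  imports "HOL-Probability.Probability"
begin

text \<open>The bijections from A to B, as functions extensional on A (so each bijection
  is represented exactly once).\<close>
definition bijections :: "'a set \<Rightarrow> 'b set \<Rightarrow> ('a \<Rightarrow> 'b) set" where
  "bijections A B = {\<sigma> \<in> extensional A. bij_betw \<sigma> A B}"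

definition unif_bij :: "'a set \<Rightarrow> 'b set \<Rightarrow> ('a \<Rightarrow> 'b) pmf" where
  "unif_bij A B = pmf_of_set (bijections A B)"

definition cond_prob :: "'c pmf \<Rightarrow> 'c set \<Rightarrow> 'c set \<Rightarrow> real" where
  "cond_prob p E C = measure_pmf.prob p (E \<inter> C) / measure_pmf.prob p C"

end

theory Submission
  imports Defs
begin


lemma card_fibers:
  assumes "finite Y" "f ` X \<subseteq> Y" "\<And>y. y \<in> Y \<Longrightarrow> card {x\<in>X. f x = y} = c"
    "\<And>y. y \<in> Y \<Longrightarrow> finite {x\<in>X. f x = y}"
  shows "card X = c * card Y"
proof -
  have X: "X = (\<Union>y\<in>Y. {x\<in>X. f x = y})" using assms(2) by auto
  have "card X = (\<Sum>y\<in>Y. card {x\<in>X. f x = y})"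
    by (subst X, rule card_UN_disjoint) (use assms in auto)
  also have "\<dots> = c * card Y" using assms(3) by simp
  finally show ?thesis .
qed

definition icount :: "nat \<Rightarrow> nat \<Rightarrow> nat" where
  "icount n z = (if n \<le> z then fact z div fact (z - n) else 0)"

lemma card_inj_funcs_le:
  assumes "finite S" "finite T" "card S \<le> card T"
  shows "card {f \<in> S \<rightarrow>\<^sub>E T. inj_on f S} = fact (card T) div (fact (card T - card S))"
  using assms
proof (induct S arbitrary: T rule: finite_induct)
  case empty
  then show ?case by (simp add: Collect_conv_if PiE_empty_domain)
next
  case (insert x S)
  have fin: "finite {f \<in> S \<rightarrow>\<^sub>E (T - {y}). inj_on f S}" for y
    by (rule finite_subset[of _ "S \<rightarrow>\<^sub>E (T - {y})"]) (use insert in \<open>auto intro: finite_PiE\<close>)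
  have hyps: "\<forall>y \<in> T. card {g \<in> S \<rightarrow>\<^sub>E (T - {y}). inj_on g S} =
      fact (card T - 1) div fact ((card T - 1) - card S)" (is "\<forall>_\<in>T. _ = ?k")
    using insert by auto
  have "card {f \<in> insert x S \<rightarrow>\<^sub>E T. inj_on f (insert x S)} =
      card ((\<lambda>(y, g). g(x := y)) ` {(y, g). y \<in> T \<and> g \<in> S \<rightarrow>\<^sub>E (T - {y}) \<and> inj_on g S})"
    using extensional_funcset_extend_domain_inj_on_eq[OF \<open>x \<notin> S\<close>, of T] by simp
  also have "\<dots> = card {(y, g). y \<in> T \<and> g \<in> S \<rightarrow>\<^sub>E (T - {y}) \<and> inj_on g S}"
    using extensional_funcset_extend_domain_inj_onI[OF \<open>x \<notin> S\<close>, of T] by (simp add: card_image)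
  also have "{(y, g). y \<in> T \<and> g \<in> S \<rightarrow>\<^sub>E (T - {y}) \<and> inj_on g S} =
      Sigma T (\<lambda>y. {g \<in> S \<rightarrow>\<^sub>E (T - {y}). inj_on g S})" by auto
  also have "card \<dots> = (\<Sum>y\<in>T. card {g \<in> S \<rightarrow>\<^sub>E (T - {y}). inj_on g S})"
    using insert fin by (simp add: card_SigmaI)
  also have "\<dots> = card T * ?k" using hyps by simp
  also have "\<dots> = card T * fact (card T - 1) div fact (card T - card (insert x S))"
    using insert unfolding div_mult1_eq[of "card T" "fact (card T - 1)"]
    by (simp add: fact_mod)
  also have "\<dots> = fact (card T) div fact (card T - card (insert x S))"
    using insert by (simp add: fact_reduce[of "card T"])
  finally show ?case .
qed

lemma card_inj_funcs:
  assumes "finite S" "finite T"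
  shows "card {f \<in> S \<rightarrow>\<^sub>E T. inj_on f S} = icount (card S) (card T)"
proof (cases "card S \<le> card T")
  case True then show ?thesis using card_inj_funcs_le[OF assms] by (simp add: icount_def)
next
  case False
  have e: "{f \<in> S \<rightarrow>\<^sub>E T. inj_on f S} = {}"
    using False card_inj[of _ S T] assms by (auto simp: PiE_def)
  show ?thesis using False unfolding e by (simp add: icount_def)
qed

lemma card_merge:
  assumes "finite X" "finite Z" "X0 \<subseteq> X" "\<tau> ` X0 \<subseteq> Y" "inj_on \<tau> X0" "Z \<subseteq> Y"
    "\<tau> ` X0 \<inter> Z = {}"
  shows "card {g \<in> X \<rightarrow>\<^sub>E Y. inj_on g X \<and> (\<forall>x\<in>X0. g x = \<tau> x) \<and> g ` (X - X0) \<subseteq> Z}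
         = icount (card (X - X0)) (card Z)"
proof -
  let ?G = "{g \<in> X \<rightarrow>\<^sub>E Y. inj_on g X \<and> (\<forall>x\<in>X0. g x = \<tau> x) \<and> g ` (X - X0) \<subseteq> Z}"
  let ?H = "{h \<in> (X - X0) \<rightarrow>\<^sub>E Z. inj_on h (X - X0)}"
  have "bij_betw (\<lambda>g. restrict g (X - X0)) ?G ?H"
  proof (rule bij_betw_byWitness[where f'="\<lambda>h x. if x \<in> X0 then \<tau> x else h x"])
    show "\<forall>g\<in>?G. (\<lambda>x. if x \<in> X0 then \<tau> x else restrict g (X - X0) x) = g"
      using assms(3) by (auto simp: PiE_def extensional_def fun_eq_iff)
    show "\<forall>h\<in>?H. restrict (\<lambda>x. if x \<in> X0 then \<tau> x else h x) (X - X0) = h"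
      by (auto simp: PiE_def extensional_def fun_eq_iff)
    show "(\<lambda>g. restrict g (X - X0)) ` ?G \<subseteq> ?H"
      by (auto simp: inj_on_def)
    show "(\<lambda>h x. if x \<in> X0 then \<tau> x else h x) ` ?H \<subseteq> ?G"
    proof
      fix g assume "g \<in> (\<lambda>h x. if x \<in> X0 then \<tau> x else h x) ` ?H"
      then obtain h where h: "h \<in> ?H" and g: "g = (\<lambda>x. if x \<in> X0 then \<tau> x else h x)" by blast
      have "g \<in> X \<rightarrow>\<^sub>E Y" using h g assms(3,4,6) by (force simp: PiE_def extensional_def Pi_def)
      moreover have "inj_on g X"
      proof (rule inj_onI)
        fix a b assume ab: "a \<in> X" "b \<in> X" "g a = g b"
        show "a = b"
        proof (cases "a \<in> X0"; cases "b \<in> X0")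
          assume "a \<in> X0" "b \<in> X0" then show ?thesis using ab g assms(5) by (auto dest: inj_onD)
        next
          assume "a \<in> X0" "b \<notin> X0" then show ?thesis using ab g h assms(7) by (force simp: PiE_def)
        next
          assume "a \<notin> X0" "b \<in> X0" then show ?thesis using ab g h assms(7) by (force simp: PiE_def)
        next
          assume "a \<notin> X0" "b \<notin> X0" then show ?thesis using ab g h by (auto dest: inj_onD)
        qed
      qed
      moreover have "g ` (X - X0) \<subseteq> Z" using g h by auto
      ultimately show "g \<in> ?G" using g by auto
    qed
  qed
  then have "card ?G = card ?H" by (rule bij_betw_same_card)
  also have "\<dots> = icount (card (X - X0)) (card Z)"
    using card_inj_funcs[of "X - X0" Z] assms by simp
  finally show ?thesis .
qed

definition pinj :: "('a \<times> 'b) set \<Rightarrow> bool" where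
  "pinj R \<longleftrightarrow> (\<forall>p\<in>R. \<forall>q\<in>R. (fst p = fst q) = (snd p = snd q))"

definition PP :: "'a set \<Rightarrow> 'b set \<Rightarrow> nat \<Rightarrow> ('a \<times> 'b) set set" where
  "PP A' B' m = {R. R \<subseteq> A' \<times> B' \<and> pinj R \<and> card R = m}"

definition good :: "nat \<Rightarrow> (nat \<Rightarrow> 'a set) \<Rightarrow> (nat \<Rightarrow> 'b set) \<Rightarrow> ('a \<times> 'b) set \<Rightarrow> bool" where
  "good k AA BB R \<longleftrightarrow> (\<forall>i\<in>{1..k}. \<not> (AA i \<subseteq> Domain R \<and> R `` AA i = BB i))"

lemma good_mono:
  assumes "R \<subseteq> R'" "pinj R'" "good k AA BB R'"
  shows "good k AA BB R"
  unfolding good_def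
proof (intro ballI notI)
  fix i assume i: "i \<in> {1..k}" and h: "AA i \<subseteq> Domain R \<and> R `` AA i = BB i"
  have "AA i \<subseteq> Domain R'" using h assms(1) by blast
  moreover have "R' `` AA i = R `` AA i"
  proof
    show "R `` AA i \<subseteq> R' `` AA i" using assms(1) by blast
    show "R' `` AA i \<subseteq> R `` AA i"
    proof
      fix y assume "y \<in> R' `` AA i"
      then obtain x where x: "x \<in> AA i" "(x, y) \<in> R'" by blast
      then obtain y' where "(x, y') \<in> R" using h by blast
      with x assms(1,2) have "y = y'" unfolding pinj_def by fastforce
      with x \<open>(x, y') \<in> R\<close> show "y \<in> R `` AA i" by blast
    qed
  qed
  ultimately show False using assms(3) i h unfolding good_def by auto
qed

lemma pinj_subset: "pinj R' \<Longrightarrow> R \<subseteq> R' \<Longrightarrow> pinj R"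
  unfolding pinj_def by blast

lemma card_Domain_pinj: "pinj R \<Longrightarrow> card (Domain R) = card R"
proof -
  assume p: "pinj R"
  have "inj_on fst R" using p unfolding pinj_def inj_on_def by (metis prod_eqI)
  moreover have "Domain R = fst ` R" by force
  ultimately show ?thesis by (simp add: card_image)
qed

lemma card_Range_pinj: "pinj R \<Longrightarrow> card (Range R) = card R"
proof -
  assume p: "pinj R"
  have "inj_on snd R" using p unfolding pinj_def inj_on_def by (metis prod_eqI)
  moreover have "Range R = snd ` R" by force
  ultimately show ?thesis by (simp add: card_image)
qed

lemma finite_PP: "finite A' \<Longrightarrow> finite B' \<Longrightarrow> finite (PP A' B' m)"
  by (rule finite_subset[of _ "Pow (A' \<times> B')"]) (auto simp: PP_def)

lemma up_fiber:
  assumes fin: "finite A'" "finite B'" and R': "R' \<in> PP A' B' (Suc m)"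
  shows "card {R \<in> PP A' B' m. R \<subseteq> R'} = Suc m"
proof -
  have finR': "finite R'" using R' fin unfolding PP_def by (auto intro: finite_subset)
  have "{R \<in> PP A' B' m. R \<subseteq> R'} = (\<lambda>p. R' - {p}) ` R'"
  proof
    show "(\<lambda>p. R' - {p}) ` R' \<subseteq> {R \<in> PP A' B' m. R \<subseteq> R'}"
      using R' finR' pinj_subset[of R'] by (auto simp: PP_def)
    show "{R \<in> PP A' B' m. R \<subseteq> R'} \<subseteq> (\<lambda>p. R' - {p}) ` R'"
    proof
      fix R assume R: "R \<in> {R \<in> PP A' B' m. R \<subseteq> R'}"
      then have "R \<noteq> R'" using R' by (auto simp: PP_def)
      then obtain p where p: "p \<in> R'" "p \<notin> R" using R by blast
      then have sub: "R \<subseteq> R' - {p}" using R by blast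
      moreover have "card (R' - {p}) = m" using p R' finR' by (simp add: PP_def)
      moreover have "card R = m" using R by (simp add: PP_def)
      ultimately have "R = R' - {p}" using finR' by (metis card_subset_eq finite_Diff)
      then show "R \<in> (\<lambda>p. R' - {p}) ` R'" using p by blast
    qed
  qed
  moreover have "inj_on (\<lambda>p. R' - {p}) R'" by (auto simp: inj_on_def)
  ultimately show ?thesis using R' by (simp add: card_image PP_def)
qed

lemma down_fiber:
  assumes fin: "finite A'" "finite B'" and R: "R \<in> PP A' B' m"
  shows "card {R' \<in> PP A' B' (Suc m). R \<subseteq> R'} = (card A' - m) * (card B' - m)"
proof -
  have sub: "R \<subseteq> A' \<times> B'" and pR: "pinj R" and cR: "card R = m" using R by (auto simp: PP_def)
  have finR: "finite R" using sub fin by (auto intro: finite_subset)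
  let ?D = "(A' - Domain R) \<times> (B' - Range R)"
  have eq: "{R' \<in> PP A' B' (Suc m). R \<subseteq> R'} = (\<lambda>p. insert p R) ` ?D"
  proof
    show "(\<lambda>p. insert p R) ` ?D \<subseteq> {R' \<in> PP A' B' (Suc m). R \<subseteq> R'}"
    proof
      fix R' assume "R' \<in> (\<lambda>p. insert p R) ` ?D"
      then obtain x y where xy: "x \<in> A'" "x \<notin> Domain R" "y \<in> B'" "y \<notin> Range R"
        and R': "R' = insert (x, y) R" by blast
      have "(x, y) \<notin> R" using xy by blast
      moreover have "pinj R'" using pR xy R' unfolding pinj_def by force
      ultimately show "R' \<in> {R' \<in> PP A' B' (Suc m). R \<subseteq> R'}"
        using R' xy sub finR cR by (auto simp: PP_def)
    qed
    show "{R' \<in> PP A' B' (Suc m). R \<subseteq> R'} \<subseteq> (\<lambda>p. insert p R) ` ?D"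
    proof
      fix R' assume R': "R' \<in> {R' \<in> PP A' B' (Suc m). R \<subseteq> R'}"
      then have sR': "R' \<subseteq> A' \<times> B'" and pR': "pinj R'" and cR': "card R' = Suc m" and RR': "R \<subseteq> R'"
        by (auto simp: PP_def)
      have finR': "finite R'" using sR' fin by (auto intro: finite_subset)
      have "R \<noteq> R'" using cR cR' by auto
      then obtain p where p: "p \<in> R'" "p \<notin> R" using RR' by blast
      obtain x y where pxy: "p = (x, y)" by (cases p)
      have "insert p R \<subseteq> R'" using p RR' by blast
      moreover have "card (insert p R) = Suc m" using p finR cR by simp
      ultimately have eqR': "insert p R = R'" using finR' cR' by (metis card_subset_eq)
      have "x \<notin> Domain R"
      proof
        assume "x \<in> Domain R"
        then obtain y' where "(x, y') \<in> R" by blast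
        then have "y = y'" using pR' RR' p pxy unfolding pinj_def by fastforce
        then show False using \<open>(x, y') \<in> R\<close> p pxy by simp
      qed
      moreover have "y \<notin> Range R"
      proof
        assume "y \<in> Range R"
        then obtain x' where "(x', y) \<in> R" by blast
        then have "x = x'" using pR' RR' p pxy unfolding pinj_def by fastforce
        then show False using \<open>(x', y) \<in> R\<close> p pxy by simp
      qed
      moreover have "x \<in> A'" "y \<in> B'" using p pxy sR' by auto
      ultimately show "R' \<in> (\<lambda>p. insert p R) ` ?D" using eqR' pxy by blast
    qed
  qed
  have inj: "inj_on (\<lambda>p. insert p R) ?D"
  proof (rule inj_onI)
    fix p q assume "p \<in> ?D" "q \<in> ?D" "insert p R = insert q R"
    moreover have "p \<notin> R" "q \<notin> R" using \<open>p \<in> ?D\<close> \<open>q \<in> ?D\<close> by (auto simp: Domain.simps)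
    ultimately show "p = q" by blast
  qed
  have "Domain R \<subseteq> A'" "Range R \<subseteq> B'" using sub by auto
  then have "card (A' - Domain R) = card A' - m" "card (B' - Range R) = card B' - m"
    using card_Domain_pinj[OF pR] card_Range_pinj[OF pR] cR fin
    by (auto simp: card_Diff_subset finite_subset)
  then show ?thesis unfolding eq using inj by (simp add: card_image card_cartesian_product)
qed

lemma frac_cross: "(a::real) * d \<le> c * b \<Longrightarrow> b > 0 \<Longrightarrow> d > 0 \<Longrightarrow> a / b \<le> c / d"
  by (simp add: divide_simps)

lemma cancel_nat: "(x::nat) * z \<le> y * z \<Longrightarrow> z > 0 \<Longrightarrow> x \<le> y" by simp
lemma real_mono2: "(x::nat) * y \<le> u * v \<Longrightarrow> real x * real y \<le> real u * real v"
  by (metis of_nat_le_iff of_nat_mult)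

lemma ac4: "(a::nat) * b * (c * d) = (d * a) * (c * b)" by (simp add: ac_simps)
lemma ac5: "(c::nat) * a * (d * b) = a * b * (c * d)" by (simp add: ac_simps)

lemma step_ratio:
  assumes fin: "finite A'" "finite B'" and ne: "PP A' B' (Suc m) \<noteq> {}"
  shows "real (card {R \<in> PP A' B' (Suc m). good k AA BB R}) / real (card (PP A' B' (Suc m)))
       \<le> real (card {R \<in> PP A' B' m. good k AA BB R}) / real (card (PP A' B' m))"
proof -
  define P where "P = PP A' B' m"
  define P' where "P' = PP A' B' (Suc m)"
  define T where "T = {(R, R'). R \<in> P \<and> R' \<in> P' \<and> R \<subseteq> R'}"
  define c where "c = (card A' - m) * (card B' - m)"
  have finP: "finite P" "finite P'" using finite_PP fin unfolding P_def P'_def by auto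
  have finT: "finite T" by (rule finite_subset[of _ "P \<times> P'"]) (use finP in \<open>auto simp: T_def\<close>)
  have fib1: "{x \<in> T. fst x = R} = Pair R ` {R' \<in> P'. R \<subseteq> R'}" if "R \<in> P" for R
    using that by (auto simp: T_def)
  have fib2: "{x \<in> T. snd x = R'} = (\<lambda>R. (R, R')) ` {R \<in> P. R \<subseteq> R'}" if "R' \<in> P'" for R'
    using that by (auto simp: T_def)
  have c1: "card {x \<in> T. fst x = R} = c" if "R \<in> P" for R
    using fib1[OF that] down_fiber[OF fin, of R m] that
    by (simp add: card_image inj_on_def P_def P'_def c_def)
  have c2: "card {x \<in> T. snd x = R'} = Suc m" if "R' \<in> P'" for R'
    using fib2[OF that] up_fiber[OF fin, of R' m] that
    by (simp add: card_image inj_on_def P_def P'_def)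
  have eq1: "card T = c * card P"
    by (rule card_fibers[OF finP(1), where f=fst]) (use c1 finT in \<open>auto simp: T_def\<close>)
  have eq2: "card T = Suc m * card P'"
    by (rule card_fibers[OF finP(2), where f=snd]) (use c2 finT in \<open>auto simp: T_def\<close>)
  let ?G = "{R \<in> P. good k AA BB R}" and ?G' = "{R \<in> P'. good k AA BB R}"
  have eq3: "card {x \<in> T. good k AA BB (snd x)} = Suc m * card ?G'"
  proof (rule card_fibers[where f=snd])
    show "finite ?G'" using finP by auto
    show "snd ` {x \<in> T. good k AA BB (snd x)} \<subseteq> ?G'" by (auto simp: T_def)
    fix R' assume R': "R' \<in> ?G'"
    have "{x \<in> {x \<in> T. good k AA BB (snd x)}. snd x = R'} = {x \<in> T. snd x = R'}" using R' by auto
    then show "card {x \<in> {x \<in> T. good k AA BB (snd x)}. snd x = R'} = Suc m"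
      "finite {x \<in> {x \<in> T. good k AA BB (snd x)}. snd x = R'}" using c2 R' finT by auto
  qed
  have eq4: "card {x \<in> T. good k AA BB (fst x)} = c * card ?G"
  proof (rule card_fibers[where f=fst])
    show "finite ?G" using finP by auto
    show "fst ` {x \<in> T. good k AA BB (fst x)} \<subseteq> ?G" by (auto simp: T_def)
    fix R assume R: "R \<in> ?G"
    have "{x \<in> {x \<in> T. good k AA BB (fst x)}. fst x = R} = {x \<in> T. fst x = R}" using R by auto
    then show "card {x \<in> {x \<in> T. good k AA BB (fst x)}. fst x = R} = c"
      "finite {x \<in> {x \<in> T. good k AA BB (fst x)}. fst x = R}" using c1 R finT by auto
  qed
  have "{x \<in> T. good k AA BB (snd x)} \<subseteq> {x \<in> T. good k AA BB (fst x)}"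
    using good_mono by (auto simp: T_def P'_def PP_def)
  then have "card {x \<in> T. good k AA BB (snd x)} \<le> card {x \<in> T. good k AA BB (fst x)}"
    using finT by (intro card_mono) auto
  then have le: "Suc m * card ?G' \<le> c * card ?G"
    using eq3 eq4 by simp
  have p'pos: "card P' > 0" using ne finP by (auto simp: P'_def card_gt_0_iff)
  have cp: "c * card P = Suc m * card P'" using eq1 eq2 by simp
  then have "c * card P > 0" using p'pos by simp
  then have ppos: "card P > 0" "c > 0" by auto
  have "card ?G' * card P * (c * Suc m) = (Suc m * card ?G') * (c * card P)" by (rule ac4)
  also have "\<dots> \<le> (c * card ?G) * (c * card P)" using le by simp
  also have "\<dots> = (c * card ?G) * (Suc m * card P')" using cp by simp
  also have "\<dots> = card ?G * card P' * (c * Suc m)" by (rule ac5)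
  finally have "card ?G' * card P \<le> card ?G * card P'" using ppos(2) by (elim cancel_nat) simp
  then have "real (card ?G') * real (card P) \<le> real (card ?G) * real (card P')"
    by (rule real_mono2)
  then show ?thesis using ppos p'pos unfolding P_def[symmetric] P'_def[symmetric]
    by (intro frac_cross) auto
qed



lemma PP_Suc_ne:
  assumes "finite A'" "finite B'" "PP A' B' (Suc m) \<noteq> {}"
  shows "PP A' B' m \<noteq> {}"
proof -
  obtain R' where R': "R' \<in> PP A' B' (Suc m)" using assms(3) by blast
  have "card {R \<in> PP A' B' m. R \<subseteq> R'} = Suc m" by (rule up_fiber[OF assms(1,2) R'])
  then have "{R \<in> PP A' B' m. R \<subseteq> R'} \<noteq> {}" by (intro notI) simp
  then show ?thesis by blast
qed

lemma chain_ratio: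
  assumes fin: "finite A'" "finite B'" and le: "m2 \<le> m1" and ne: "PP A' B' m1 \<noteq> {}"
  shows "real (card {R \<in> PP A' B' m1. good k AA BB R}) / real (card (PP A' B' m1))
       \<le> real (card {R \<in> PP A' B' m2. good k AA BB R}) / real (card (PP A' B' m2))"
  using le ne
proof (induction m1 rule: dec_induct)
  case base then show ?case by simp
next
  case (step n)
  have "PP A' B' n \<noteq> {}" using PP_Suc_ne[OF fin step.prems] .
  then have ih: "real (card {R \<in> PP A' B' n. good k AA BB R}) / real (card (PP A' B' n))
       \<le> real (card {R \<in> PP A' B' m2. good k AA BB R}) / real (card (PP A' B' m2))"
    using step.IH by blast
  show ?case using order.trans[OF step_ratio[OF fin step.prems, of k AA BB] ih] .
qed

definition rho :: "'a set \<Rightarrow> 'b set \<Rightarrow> ('a \<Rightarrow> 'b) \<Rightarrow> ('a \<times> 'b) set" where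
  "rho A' B' \<sigma> = (\<lambda>x. (x, \<sigma> x)) ` {x \<in> A'. \<sigma> x \<in> B'}"

definition rf :: "('a \<times> 'b) set \<Rightarrow> 'a \<Rightarrow> 'b" where
  "rf R x = (THE y. (x, y) \<in> R)"

lemma pinjD: assumes "pinj R" "p \<in> R" "q \<in> R" shows "(fst p = fst q) = (snd p = snd q)"
  using assms unfolding pinj_def by blast
lemma rf_eq: "pinj R \<Longrightarrow> (x, y) \<in> R \<Longrightarrow> rf R x = y"
proof -
  assume p: "pinj R" and xy: "(x, y) \<in> R"
  have h: "\<And>y'. (x, y') \<in> R \<Longrightarrow> y' = y" using pinjD[OF p _ xy] by (metis fst_conv snd_conv)
  show ?thesis unfolding rf_def by (rule the_equality[where P="\<lambda>y. (x, y) \<in> R", OF xy h])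
qed

lemma bijections_eq:
  assumes "finite A" "finite B" "card A = card B"
  shows "bijections A B = {f \<in> A \<rightarrow>\<^sub>E B. inj_on f A}"
proof (intro equalityI subsetI)
  fix f assume "f \<in> bijections A B"
  then show "f \<in> {f \<in> A \<rightarrow>\<^sub>E B. inj_on f A}"
    by (auto simp: bijections_def bij_betw_def PiE_def Pi_def)
next
  fix f assume "f \<in> {f \<in> A \<rightarrow>\<^sub>E B. inj_on f A}"
  then have f: "f \<in> A \<rightarrow>\<^sub>E B" "inj_on f A" by auto
  then have "f ` A \<subseteq> B" by (auto simp: PiE_def)
  moreover have "card (f ` A) = card B" using f assms by (simp add: card_image)
  ultimately have "f ` A = B" using assms by (metis card_subset_eq)
  then show "f \<in> bijections A B" using f by (auto simp: bijections_def bij_betw_def PiE_def)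
qed



context
  fixes A :: "'a set" and B :: "'b set" and A' :: "'a set" and B' :: "'b set"
  assumes finA: "finite A" and finB: "finite B" and cAB: "card A = card B"
    and AA': "A' \<subseteq> A" and BB': "B' \<subseteq> B"
begin

lemma bij_inj: "\<sigma> \<in> bijections A B \<Longrightarrow> inj_on \<sigma> A"
  by (simp add: bijections_def bij_betw_def)

lemma bij_in: "\<sigma> \<in> bijections A B \<Longrightarrow> x \<in> A \<Longrightarrow> \<sigma> x \<in> B"
  by (auto simp: bijections_def bij_betw_def)

lemma finite_bij: "finite (bijections A B)"
  using bijections_eq[OF finA finB cAB] finA finB
  by (auto intro: finite_subset[OF _ finite_PiE[of A "\<lambda>_. B"]])

lemma rho_PP: "\<sigma> \<in> bijections A B \<Longrightarrow> rho A' B' \<sigma> \<in> PP A' B' (card (rho A' B' \<sigma>))"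
proof -
  assume s: "\<sigma> \<in> bijections A B"
  have "pinj (rho A' B' \<sigma>)" unfolding pinj_def rho_def
    using inj_onD[OF bij_inj[OF s]] AA' by auto
  then show ?thesis by (auto simp: PP_def rho_def)
qed

lemma card_rho0: "\<sigma> \<in> bijections A B \<Longrightarrow> card (rho A' B' \<sigma>) = card {x \<in> A'. \<sigma> x \<in> B'}"
  unfolding rho_def by (rule card_image) (auto simp: inj_on_def)

lemma card_rho: "\<sigma> \<in> bijections A B \<Longrightarrow> card (\<sigma> ` A' - B') = card A' - card (rho A' B' \<sigma>)"
proof -
  assume s: "\<sigma> \<in> bijections A B"
  have finA': "finite A'" using AA' finA by (rule finite_subset)
  have "\<sigma> ` A' - B' = \<sigma> ` (A' - {x \<in> A'. \<sigma> x \<in> B'})" by auto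
  also have "card \<dots> = card (A' - {x \<in> A'. \<sigma> x \<in> B'})"
    using inj_on_subset[OF bij_inj[OF s]] AA' by (intro card_image) (meson Diff_subset order_trans)
  also have "\<dots> = card A' - card {x \<in> A'. \<sigma> x \<in> B'}"
    using finA' by (intro card_Diff_subset) auto
  finally show ?thesis using card_rho0[OF s] by simp
qed

lemma Domain_rho: "Domain (rho A' B' \<sigma>) = {x \<in> A'. \<sigma> x \<in> B'}"
  unfolding rho_def by force

lemma Image_rho: "rho A' B' \<sigma> `` X = \<sigma> ` (X \<inter> {x \<in> A'. \<sigma> x \<in> B'})"
  unfolding rho_def by force

lemma good_rho:
  assumes s: "\<sigma> \<in> bijections A B"
    and AAi: "\<And>i. i \<in> {1..k} \<Longrightarrow> AA i \<subseteq> A'" and BBi: "\<And>i. i \<in> {1..k} \<Longrightarrow> BB i \<subseteq> B'"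
  shows "(\<forall>i\<in>{1..k}. \<sigma> ` AA i \<noteq> BB i) \<longleftrightarrow> good k AA BB (rho A' B' \<sigma>)"
proof -
  have "(\<sigma> ` AA i = BB i) \<longleftrightarrow> (AA i \<subseteq> Domain (rho A' B' \<sigma>) \<and> rho A' B' \<sigma> `` AA i = BB i)"
    if i: "i \<in> {1..k}" for i
  proof
    assume h: "\<sigma> ` AA i = BB i"
    then have sub: "AA i \<subseteq> {x \<in> A'. \<sigma> x \<in> B'}" using AAi[OF i] BBi[OF i] by auto
    then have "AA i \<inter> {x \<in> A'. \<sigma> x \<in> B'} = AA i" by blast
    then show "AA i \<subseteq> Domain (rho A' B' \<sigma>) \<and> rho A' B' \<sigma> `` AA i = BB i"
      using sub h unfolding Domain_rho Image_rho by simp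
  next
    assume h: "AA i \<subseteq> Domain (rho A' B' \<sigma>) \<and> rho A' B' \<sigma> `` AA i = BB i"
    then have "AA i \<inter> {x \<in> A'. \<sigma> x \<in> B'} = AA i" unfolding Domain_rho by blast
    then show "\<sigma> ` AA i = BB i" using h unfolding Image_rho by simp
  qed
  then show ?thesis unfolding good_def by blast
qed

lemma rho_iff:
  assumes s: "\<sigma> \<in> bijections A B" and R: "R \<in> PP A' B' m"
  shows "rho A' B' \<sigma> = R \<longleftrightarrow> (\<forall>x\<in>Domain R. \<sigma> x = rf R x) \<and> \<sigma> ` (A' - Domain R) \<subseteq> B - B'"
proof -
  have RS: "R \<subseteq> A' \<times> B'" and pR: "pinj R" using R by (auto simp: PP_def)
  show ?thesis
  proof
    assume e: "rho A' B' \<sigma> = R"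
    have "\<forall>x\<in>Domain R. \<sigma> x = rf R x"
    proof
      fix x assume "x \<in> Domain R"
      then obtain y where xy: "(x, y) \<in> R" by blast
      then have "(x, y) \<in> rho A' B' \<sigma>" using e by simp
      then have "y = \<sigma> x" unfolding rho_def by auto
      then show "\<sigma> x = rf R x" using rf_eq[OF pR xy] by simp
    qed
    moreover have "\<sigma> ` (A' - Domain R) \<subseteq> B - B'"
    proof
      fix z assume "z \<in> \<sigma> ` (A' - Domain R)"
      then obtain x where x: "x \<in> A'" "x \<notin> Domain R" "z = \<sigma> x" by blast
      have "z \<in> B" using x bij_in[OF s] AA' by auto
      moreover have "z \<notin> B'"
      proof
        assume "z \<in> B'"
        then have "(x, \<sigma> x) \<in> rho A' B' \<sigma>" using x unfolding rho_def by auto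
        then show False using e x by auto
      qed
      ultimately show "z \<in> B - B'" by blast
    qed
    ultimately show "(\<forall>x\<in>Domain R. \<sigma> x = rf R x) \<and> \<sigma> ` (A' - Domain R) \<subseteq> B - B'" by blast
  next
    assume h: "(\<forall>x\<in>Domain R. \<sigma> x = rf R x) \<and> \<sigma> ` (A' - Domain R) \<subseteq> B - B'"
    show "rho A' B' \<sigma> = R"
    proof (intro equalityI subsetI)
      fix p assume "p \<in> rho A' B' \<sigma>"
      then obtain x where x: "x \<in> A'" "\<sigma> x \<in> B'" "p = (x, \<sigma> x)" unfolding rho_def by auto
      have "x \<in> Domain R" using h x by blast
      then obtain y where xy: "(x, y) \<in> R" by blast
      then have "\<sigma> x = y" using h rf_eq[OF pR xy] by auto
      then show "p \<in> R" using x xy by simp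
    next
      fix p assume p: "p \<in> R"
      obtain x y where pxy: "p = (x, y)" by (cases p)
      have "x \<in> A'" "y \<in> B'" using p pxy RS by auto
      moreover have "\<sigma> x = y" using h rf_eq[OF pR] p pxy by auto
      ultimately show "p \<in> rho A' B' \<sigma>" unfolding rho_def using pxy by auto
    qed
  qed
qed

definition FF :: "nat \<Rightarrow> nat" where
  "FF m = icount (card A - card A') (card B - card A') * icount (card A' - m) (card B - card B')"

lemma fiber_rho:
  assumes R: "R \<in> PP A' B' m"
  shows "card {\<sigma> \<in> bijections A B. rho A' B' \<sigma> = R} = FF m"
proof -
  have RS: "R \<subseteq> A' \<times> B'" and pR: "pinj R" and cR: "card R = m" using R by (auto simp: PP_def)
  have finA': "finite A'" using AA' finA by (rule finite_subset)
  have DA: "Domain R \<subseteq> A'" using RS by auto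
  let ?X = "{\<sigma> \<in> bijections A B. rho A' B' \<sigma> = R}"
  let ?Q = "{g \<in> A' \<rightarrow>\<^sub>E B. inj_on g A' \<and> (\<forall>x\<in>Domain R. g x = rf R x) \<and> g ` (A' - Domain R) \<subseteq> B - B'}"
  have rfD: "rf R x \<in> B'" if "x \<in> Domain R" for x
    using that rf_eq[OF pR] RS by auto
  have injrf: "inj_on (rf R) (Domain R)"
  proof (rule inj_onI)
    fix x x' assume "x \<in> Domain R" "x' \<in> Domain R" "rf R x = rf R x'"
    then obtain y y' where xy: "(x, y) \<in> R" "(x', y') \<in> R" by blast
    then have "y = y'" using \<open>rf R x = rf R x'\<close> rf_eq[OF pR] by auto
    then show "x = x'" using pinjD[OF pR xy] by simp
  qed
  have cQ: "card ?Q = icount (card A' - m) (card B - card B')"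
  proof -
    have "card ?Q = icount (card (A' - Domain R)) (card (B - B'))"
      proof -
        have f1: "finite (B - B')" using finB by simp
        have f2: "rf R ` Domain R \<subseteq> B" using rfD BB' by blast
        have f3: "rf R ` Domain R \<inter> (B - B') = {}" using rfD by blast
        show ?thesis by (rule card_merge[OF finA' f1 DA f2 injrf Diff_subset f3])
      qed
    moreover have "card (A' - Domain R) = card A' - m"
      using card_Domain_pinj[OF pR] cR DA finA' by (simp add: card_Diff_subset finite_subset)
    moreover have "card (B - B') = card B - card B'"
      using BB' finB by (simp add: card_Diff_subset finite_subset)
    ultimately show ?thesis by simp
  qed
  have fib: "card {\<sigma> \<in> ?X. restrict \<sigma> A' = g} = icount (card A - card A') (card B - card A')"
    if g: "g \<in> ?Q" for g
  proof -
    have gE: "g \<in> A' \<rightarrow>\<^sub>E B" and ginj: "inj_on g A'" using g by auto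
    have eq: "{\<sigma> \<in> ?X. restrict \<sigma> A' = g} =
      {f \<in> A \<rightarrow>\<^sub>E B. inj_on f A \<and> (\<forall>x\<in>A'. f x = g x) \<and> f ` (A - A') \<subseteq> B - g ` A'}"
    proof (intro equalityI subsetI)
      fix \<sigma> assume "\<sigma> \<in> {\<sigma> \<in> ?X. restrict \<sigma> A' = g}"
      then have s: "\<sigma> \<in> bijections A B" and r: "restrict \<sigma> A' = g" by auto
      have sE: "\<sigma> \<in> A \<rightarrow>\<^sub>E B" "inj_on \<sigma> A" using s bijections_eq[OF finA finB cAB] by auto
      have agree: "\<forall>x\<in>A'. \<sigma> x = g x" using r by auto
      have "g ` A' = \<sigma> ` A'" using agree by auto
      moreover have "\<sigma> ` (A - A') \<inter> \<sigma> ` A' = {}"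
        using sE(2) AA' using inj_on_image_Int[OF sE(2), of "A - A'" A'] AA' by auto
      moreover have "\<sigma> ` (A - A') \<subseteq> B" using sE(1) by (auto simp: PiE_def)
      ultimately have "\<sigma> ` (A - A') \<subseteq> B - g ` A'" by blast
      then show "\<sigma> \<in> {f \<in> A \<rightarrow>\<^sub>E B. inj_on f A \<and> (\<forall>x\<in>A'. f x = g x) \<and> f ` (A - A') \<subseteq> B - g ` A'}"
        using sE agree by blast
    next
      fix f assume "f \<in> {f \<in> A \<rightarrow>\<^sub>E B. inj_on f A \<and> (\<forall>x\<in>A'. f x = g x) \<and> f ` (A - A') \<subseteq> B - g ` A'}"
      then have fE: "f \<in> A \<rightarrow>\<^sub>E B" "inj_on f A" and agree: "\<forall>x\<in>A'. f x = g x" by auto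
      have s: "f \<in> bijections A B" using fE bijections_eq[OF finA finB cAB] by auto
      have r: "restrict f A' = g" using agree gE by (auto simp: PiE_def extensional_def fun_eq_iff)
      have "f ` (A' - Domain R) = g ` (A' - Domain R)" using agree by auto
      then have i2: "f ` (A' - Domain R) \<subseteq> B - B'" using g by auto
      have i1: "\<forall>x\<in>Domain R. f x = rf R x"
      proof
        fix x assume x: "x \<in> Domain R"
        then have "x \<in> A'" using DA by blast
        then show "f x = rf R x" using agree g x by simp
      qed
      have "rho A' B' f = R" using rho_iff[OF s R] i1 i2 by blast
      then show "f \<in> {\<sigma> \<in> ?X. restrict \<sigma> A' = g}" using s r by auto
    qed
    have "card {f \<in> A \<rightarrow>\<^sub>E B. inj_on f A \<and> (\<forall>x\<in>A'. f x = g x) \<and> f ` (A - A') \<subseteq> B - g ` A'}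
       = icount (card (A - A')) (card (B - g ` A'))"
      proof -
        have f1: "finite (B - g ` A')" using finB by simp
        have f2: "g ` A' \<subseteq> B" using gE by (auto simp: PiE_def)
        have f3: "g ` A' \<inter> (B - g ` A') = {}" by blast
        show ?thesis by (rule card_merge[OF finA f1 AA' f2 ginj Diff_subset f3])
      qed
    moreover have "card (A - A') = card A - card A'" using AA' finA by (simp add: card_Diff_subset finite_subset)
    moreover have "card (B - g ` A') = card B - card A'"
    proof -
      have "g ` A' \<subseteq> B" using gE by (auto simp: PiE_def)
      then have "card (B - g ` A') = card B - card (g ` A')" using finB by (simp add: card_Diff_subset finite_subset)
      then show ?thesis using ginj by (simp add: card_image)
    qed
    ultimately show ?thesis using eq by simp
  qed
  have "card ?X = icount (card A - card A') (card B - card A') * card ?Q"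
  proof (rule card_fibers[where f="\<lambda>\<sigma>. restrict \<sigma> A'"])
    show "finite ?Q"
      by (rule finite_subset[OF _ finite_PiE[of A' "\<lambda>_. B"]]) (use finA' finB in auto)
    show "(\<lambda>\<sigma>. restrict \<sigma> A') ` ?X \<subseteq> ?Q"
    proof
      fix g assume "g \<in> (\<lambda>\<sigma>. restrict \<sigma> A') ` ?X"
      then obtain \<sigma> where s: "\<sigma> \<in> bijections A B" "rho A' B' \<sigma> = R" and g: "g = restrict \<sigma> A'" by blast
      have h: "(\<forall>x\<in>Domain R. \<sigma> x = rf R x) \<and> \<sigma> ` (A' - Domain R) \<subseteq> B - B'"
        using rho_iff[OF s(1) R] s(2) by simp
      have "g \<in> A' \<rightarrow>\<^sub>E B" using g bij_in[OF s(1)] AA' by auto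
      moreover have "inj_on g A'" using g inj_on_subset[OF bij_inj[OF s(1)] AA'] by (simp add: inj_on_def)
      moreover have "\<forall>x\<in>Domain R. g x = rf R x" using g h DA by auto
      moreover have "g ` (A' - Domain R) \<subseteq> B - B'" using g h by auto
      ultimately show "g \<in> ?Q" by blast
    qed
    show "card {\<sigma> \<in> ?X. restrict \<sigma> A' = g} = icount (card A - card A') (card B - card A')"
      if "g \<in> ?Q" for g using fib[OF that] .
    show "finite {\<sigma> \<in> ?X. restrict \<sigma> A' = g}" for g using finite_bij by auto
  qed
  then show ?thesis using cQ by (simp add: FF_def)
qed

lemma count_rho:
  assumes Y: "Y \<subseteq> PP A' B' m"
  shows "card {\<sigma> \<in> bijections A B. rho A' B' \<sigma> \<in> Y} = FF m * card Y"
proof (rule card_fibers[where f="rho A' B'"])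
  show "finite Y" using Y finite_PP[of A' B' m] AA' BB' finA finB
    by (meson finite_subset)
  show "rho A' B' ` {\<sigma> \<in> bijections A B. rho A' B' \<sigma> \<in> Y} \<subseteq> Y" by auto
  fix R assume R: "R \<in> Y"
  have "{\<sigma> \<in> {\<sigma> \<in> bijections A B. rho A' B' \<sigma> \<in> Y}. rho A' B' \<sigma> = R} = {\<sigma> \<in> bijections A B. rho A' B' \<sigma> = R}"
    using R by auto
  then show "card {\<sigma> \<in> {\<sigma> \<in> bijections A B. rho A' B' \<sigma> \<in> Y}. rho A' B' \<sigma> = R} = FF m"
    "finite {\<sigma> \<in> {\<sigma> \<in> bijections A B. rho A' B' \<sigma> \<in> Y}. rho A' B' \<sigma> = R}"
    using fiber_rho[of R m] R Y finite_bij by auto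
qed

lemma cancel_frac: "(a::nat) > 0 \<Longrightarrow> (N::nat) > 0 \<Longrightarrow>
   (real (a * b) / N) / (real (a * c) / N) = real b / real c"
  by (simp add: divide_simps)

lemma bij_ne: "bijections A B \<noteq> {}"
proof -
  obtain h where h: "bij_betw h A B" using finite_same_card_bij[OF finA finB cAB] by blast
  have "bij_betw (restrict h A) A B" using h by (rule bij_betw_cong[THEN iffD1, rotated]) simp
  then have "restrict h A \<in> bijections A B" by (simp add: bijections_def)
  then show ?thesis by blast
qed

lemma prob_eq: "measure_pmf.prob (unif_bij A B) X = card (bijections A B \<inter> X) / card (bijections A B)"
  unfolding unif_bij_def by (rule measure_pmf_of_set[OF bij_ne finite_bij])

lemma cond_ratio:
  assumes AAi: "\<And>i. i \<in> {1..k} \<Longrightarrow> AA i \<subseteq> A'" and BBi: "\<And>i. i \<in> {1..k} \<Longrightarrow> BB i \<subseteq> B'"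
    and pos: "measure_pmf.prob (unif_bij A B) {\<sigma>. card (\<sigma> ` A' - B') = t} > 0"
  shows "PP A' B' (card A' - t) \<noteq> {}"
    "cond_prob (unif_bij A B) {\<sigma>. \<forall>i\<in>{1..k}. \<sigma> ` AA i \<noteq> BB i} {\<sigma>. card (\<sigma> ` A' - B') = t}
     = real (card {R \<in> PP A' B' (card A' - t). good k AA BB R}) / real (card (PP A' B' (card A' - t)))"
proof -
  define m where "m = card A' - t"
  define N where "N = card (bijections A B)"
  have Npos: "N > 0" using bij_ne finite_bij by (simp add: N_def card_gt_0_iff)
  have finA': "finite A'" using AA' finA by (rule finite_subset)
  have cpos: "card (bijections A B \<inter> {\<sigma>. card (\<sigma> ` A' - B') = t}) > 0"
    using pos unfolding prob_eq by (simp add: zero_less_divide_iff)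
  then have "bijections A B \<inter> {\<sigma>. card (\<sigma> ` A' - B') = t} \<noteq> {}" by (intro notI) simp
  then obtain \<sigma>0 where s0: "\<sigma>0 \<in> bijections A B" "card (\<sigma>0 ` A' - B') = t" by blast
  have "card (\<sigma>0 ` A' - B') \<le> card (\<sigma>0 ` A')" using finA' by (intro card_mono) auto
  also have "\<dots> \<le> card A'" using finA' by (rule card_image_le)
  finally have tle: "t \<le> card A'" using s0 by simp
  have crle: "card (rho A' B' \<sigma>) \<le> card A'" if "\<sigma> \<in> bijections A B" for \<sigma>
    using card_rho0[OF that] finA' by (simp add: card_mono)
  have Ceq: "bijections A B \<inter> {\<sigma>. card (\<sigma> ` A' - B') = t} = {\<sigma> \<in> bijections A B. rho A' B' \<sigma> \<in> PP A' B' m}"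
  proof (intro equalityI subsetI)
    fix \<sigma> assume "\<sigma> \<in> bijections A B \<inter> {\<sigma>. card (\<sigma> ` A' - B') = t}"
    then have s: "\<sigma> \<in> bijections A B" and c: "card (\<sigma> ` A' - B') = t" by auto
    have "card (rho A' B' \<sigma>) = m" using c card_rho[OF s] crle[OF s] tle by (simp add: m_def)
    then show "\<sigma> \<in> {\<sigma> \<in> bijections A B. rho A' B' \<sigma> \<in> PP A' B' m}" using rho_PP[OF s] s by simp
  next
    fix \<sigma> assume "\<sigma> \<in> {\<sigma> \<in> bijections A B. rho A' B' \<sigma> \<in> PP A' B' m}"
    then have s: "\<sigma> \<in> bijections A B" and c: "card (rho A' B' \<sigma>) = m" by (auto simp: PP_def)
    have "card (\<sigma> ` A' - B') = t" using c card_rho[OF s] tle by (simp add: m_def)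
    then show "\<sigma> \<in> bijections A B \<inter> {\<sigma>. card (\<sigma> ` A' - B') = t}" using s by simp
  qed
  have gr: "\<And>\<sigma>. \<sigma> \<in> bijections A B \<Longrightarrow> (\<forall>i\<in>{1..k}. \<sigma> ` AA i \<noteq> BB i) = good k AA BB (rho A' B' \<sigma>)"
    by (rule good_rho[where k=k and AA=AA and BB=BB]) (use AAi BBi in auto)
  have Geq: "bijections A B \<inter> ({\<sigma>. \<forall>i\<in>{1..k}. \<sigma> ` AA i \<noteq> BB i} \<inter> {\<sigma>. card (\<sigma> ` A' - B') = t})
     = {\<sigma> \<in> bijections A B. rho A' B' \<sigma> \<in> {R \<in> PP A' B' m. good k AA BB R}}"
  proof -
    have "bijections A B \<inter> ({\<sigma>. \<forall>i\<in>{1..k}. \<sigma> ` AA i \<noteq> BB i} \<inter> {\<sigma>. card (\<sigma> ` A' - B') = t})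
      = {\<sigma> \<in> bijections A B \<inter> {\<sigma>. card (\<sigma> ` A' - B') = t}. \<forall>i\<in>{1..k}. \<sigma> ` AA i \<noteq> BB i}" by auto
    also have "\<dots> = {\<sigma> \<in> {\<sigma> \<in> bijections A B. rho A' B' \<sigma> \<in> PP A' B' m}. good k AA BB (rho A' B' \<sigma>)}"
      unfolding Ceq using gr by auto
    finally show ?thesis by auto
  qed
  have cC: "card (bijections A B \<inter> {\<sigma>. card (\<sigma> ` A' - B') = t}) = FF m * card (PP A' B' m)"
    unfolding Ceq by (rule count_rho) simp
  have cG: "card (bijections A B \<inter> ({\<sigma>. \<forall>i\<in>{1..k}. \<sigma> ` AA i \<noteq> BB i} \<inter> {\<sigma>. card (\<sigma> ` A' - B') = t}))
      = FF m * card {R \<in> PP A' B' m. good k AA BB R}"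
    unfolding Geq by (rule count_rho) auto
  have Fpos: "FF m > 0" and Ppos: "card (PP A' B' m) > 0" using cpos cC by auto
  then show "PP A' B' (card A' - t) \<noteq> {}" by (auto simp: m_def)
  have "cond_prob (unif_bij A B) {\<sigma>. \<forall>i\<in>{1..k}. \<sigma> ` AA i \<noteq> BB i} {\<sigma>. card (\<sigma> ` A' - B') = t}
     = (real (FF m * card {R \<in> PP A' B' m. good k AA BB R}) / N) / (real (FF m * card (PP A' B' m)) / N)"
    unfolding cond_prob_def prob_eq cG cC N_def ..
  also have "\<dots> = real (card {R \<in> PP A' B' m. good k AA BB R}) / real (card (PP A' B' m))"
    using Fpos Npos by (intro cancel_frac) auto
  finally show "cond_prob (unif_bij A B) {\<sigma>. \<forall>i\<in>{1..k}. \<sigma> ` AA i \<noteq> BB i} {\<sigma>. card (\<sigma> ` A' - B') = t}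
     = real (card {R \<in> PP A' B' (card A' - t). good k AA BB R}) / real (card (PP A' B' (card A' - t)))"
    by (simp add: m_def)
qed

end


theorem lemma4:
  fixes A :: "'a set" and B :: "'b set" and r k :: nat
    and A' :: "'a set" and B' :: "'b set"
    and AA :: "nat \<Rightarrow> 'a set" and BB :: "nat \<Rightarrow> 'b set"
  assumes "finite A" "finite B" "card A = r" "card B = r"
    and "A' \<subseteq> A" "B' \<subseteq> B"
    and "\<And>i. i \<in> {1..k} \<Longrightarrow> AA i \<subseteq> A'"
    and "\<And>i. i \<in> {1..k} \<Longrightarrow> BB i \<subseteq> B'"
    and "(t1::nat) \<le> t2"
    and "measure_pmf.prob (unif_bij A B) {\<sigma>. card (\<sigma> ` A' - B') = t1} > 0"
    and "measure_pmf.prob (unif_bij A B) {\<sigma>. card (\<sigma> ` A' - B') = t2} > 0"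
  shows "cond_prob (unif_bij A B) {\<sigma>. \<forall>i\<in>{1..k}. \<sigma> ` AA i \<noteq> BB i}
                                 {\<sigma>. card (\<sigma> ` A' - B') = t1}
       \<le> cond_prob (unif_bij A B) {\<sigma>. \<forall>i\<in>{1..k}. \<sigma> ` AA i \<noteq> BB i}
                                 {\<sigma>. card (\<sigma> ` A' - B') = t2}"
proof -
  have cAB: "card A = card B" using assms(3,4) by simp
  have finA': "finite A'" using assms(1,5) by (rule finite_subset[rotated])
  have finB': "finite B'" using assms(2,6) by (rule finite_subset[rotated])
  note r1 = cond_ratio[OF assms(1,2) cAB assms(5,6), where k=k and AA=AA and BB=BB and t=t1, OF assms(7,8) assms(10)]
  note r2 = cond_ratio[OF assms(1,2) cAB assms(5,6), where k=k and AA=AA and BB=BB and t=t2, OF assms(7,8) assms(11)]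
  have le: "card A' - t2 \<le> card A' - t1" using assms(9) by simp
  have "real (card {R \<in> PP A' B' (card A' - t1). good k AA BB R}) / real (card (PP A' B' (card A' - t1)))
       \<le> real (card {R \<in> PP A' B' (card A' - t2). good k AA BB R}) / real (card (PP A' B' (card A' - t2)))"
    by (rule chain_ratio[OF finA' finB' le r1(1)])
  then show ?thesis by (simp only: r1(2) r2(2))
qed

end
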